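(* Let $n$ be a positive integer that is not a power of $2$, let $A$ be an abelian group of order $n$ and let $m$ be the number of elements of $A$ of order at most $2$. Then the number of inverse-closed subsets $S\subseteq A$ for which there exist subgroups $H,K$ with $1<H\leq K<A$ such that $S\setminus K$ is a union of $H$-cosets is at most $2^{m/2+11n/24+2(\log_2 n)^2}$.
   Context: A subset $S$ of a group is inverse-closed if $S^{-1}=S$. *)

theory Defs
  imports "HOL-Algebra.Algebra"
begin

definition inverse_closed :: "('a, 'b) monoid_scheme \<Rightarrow> 'a set \<Rightarrow> bool" where
  "inverse_closed G S \<longleftrightarrow> S \<subseteq> carrier G \<and> (\<lambda>x. inv\<^bsub>G\<^esub> x) ` S = S"

end

theory Submission
  imports Defs
begin

lemma invol_closed_card:
  fixes U :: "'x set" and f :: "'x \<Rightarrow> 'x"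
  assumes "finite U" "\<forall>x\<in>U. f x \<in> U \<and> f (f x) = x"
  shows "card {Q. Q \<subseteq> U \<and> f ` Q = Q} ^ 2 \<le> 2 ^ (card U + card {x\<in>U. f x = x})"
  using assms
proof (induction "card U" arbitrary: U rule: less_induct)
  case less
  show ?case
  proof (cases "U = {}")
    case True
    have "{Q. Q \<subseteq> U \<and> f ` Q = Q} = {{}}" using True by auto
    then show ?thesis using True by simp
  next
    case False
    then obtain x where x: "x \<in> U" by blast
    define U' where "U' = U - {x, f x}"
    have fx: "f x \<in> U" "f (f x) = x" using less.prems x by auto
    have fin': "finite U'" using less.prems U'_def by auto
    have inv': "\<forall>y\<in>U'. f y \<in> U' \<and> f (f y) = y"
    proof
      fix y assume y: "y \<in> U'"
      then have yU: "y \<in> U" "y \<noteq> x" "y \<noteq> f x" unfolding U'_def by auto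
      have "f y \<in> U" "f (f y) = y" using less.prems yU by auto
      moreover have "f y \<noteq> x" using yU fx \<open>f (f y) = y\<close> by metis
      moreover have "f y \<noteq> f x" using yU fx \<open>f (f y) = y\<close> by metis
      ultimately show "f y \<in> U' \<and> f (f y) = y" unfolding U'_def by auto
    qed
    have lt: "card U' < card U" unfolding U'_def using x less.prems
      by (intro psubset_card_mono) auto
    note IH = less.hyps[OF lt fin' inv']
    define A where "A = {Q. Q \<subseteq> U \<and> f ` Q = Q}"
    define A' where "A' = {Q. Q \<subseteq> U' \<and> f ` Q = Q}"
    have inj: "inj_on (\<lambda>Q. (Q - {x, f x}, x \<in> Q)) A"
    proof (rule inj_onI)
      fix Q R assume XA: "Q \<in> A" and YA: "R \<in> A" and eq: "(Q - {x, f x}, x \<in> Q) = (R - {x, f x}, x \<in> R)"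
      have cl: "\<And>Z z. Z \<in> A \<Longrightarrow> z \<in> Z \<Longrightarrow> f z \<in> Z" unfolding A_def by blast
      have "x \<in> Q \<longleftrightarrow> f x \<in> Q" using cl[OF XA, of x] cl[OF XA, of "f x"] fx by auto
      moreover have "x \<in> R \<longleftrightarrow> f x \<in> R" using cl[OF YA, of x] cl[OF YA, of "f x"] fx by auto
      ultimately show "Q = R" using eq by blast
    qed
    have maps: "(\<lambda>Q. (Q - {x, f x}, x \<in> Q)) ` A \<subseteq> A' \<times> UNIV"
    proof
      fix p assume "p \<in> (\<lambda>Q. (Q - {x, f x}, x \<in> Q)) ` A"
      then obtain Q where XA: "Q \<in> A" and p: "p = (Q - {x, f x}, x \<in> Q)" by blast
      have XU: "Q \<subseteq> U" and cl: "f ` Q = Q" using XA unfolding A_def by auto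
      have "f ` (Q - {x, f x}) = Q - {x, f x}"
      proof
        show "f ` (Q - {x, f x}) \<subseteq> Q - {x, f x}"
        proof
          fix z assume "z \<in> f ` (Q - {x, f x})"
          then obtain y where y: "y \<in> Q" "y \<noteq> x" "y \<noteq> f x" "z = f y" by blast
          have "f (f y) = y" using y XU less.prems by blast
          then show "z \<in> Q - {x, f x}" using y cl fx by auto
        qed
      next
        show "Q - {x, f x} \<subseteq> f ` (Q - {x, f x})"
        proof
          fix z assume z: "z \<in> Q - {x, f x}"
          then obtain y where y: "y \<in> Q" "z = f y" using cl by blast
          have "f z = y" using y XU less.prems by auto
          have ffz: "f (f z) = z" using z XU less.prems by auto
          have "y \<noteq> x" "y \<noteq> f x" using z fx \<open>f z = y\<close> ffz by auto
          then show "z \<in> f ` (Q - {x, f x})" using y by blast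
        qed
      qed
      then show "p \<in> A' \<times> UNIV" using p XU unfolding A'_def U'_def by auto
    qed
    have finA': "finite A'" unfolding A'_def using fin' by simp
    have "card A \<le> card (A' \<times> (UNIV :: bool set))"
      using card_inj_on_le[OF inj maps] finA' by simp
    also have "\<dots> = 2 * card A'" by (simp add: card_cartesian_product)
    finally have cA: "card A \<le> 2 * card A'" .
    have key: "card U + card {y\<in>U. f y = y} = card U' + card {y\<in>U'. f y = y} + 2"
    proof (cases "f x = x")
      case True
      have "U = insert x U'" "x \<notin> U'" using x True unfolding U'_def by auto
      moreover have "{y\<in>U. f y = y} = insert x {y\<in>U'. f y = y}" using x True unfolding U'_def by auto
      ultimately show ?thesis using fin' True by simp
    next
      case False
      have "U = insert x (insert (f x) U')" "x \<notin> U'" "f x \<notin> U'" using x fx unfolding U'_def by auto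
      moreover have "{y\<in>U. f y = y} = {y\<in>U'. f y = y}" using x fx False unfolding U'_def by auto
      ultimately show ?thesis using fin' False by simp
    qed
    have "card A ^ 2 \<le> (2 * card A') ^ 2" by (rule power_mono[OF cA]) simp
    also have "\<dots> = 4 * card A' ^ 2" by (simp add: power_mult_distrib)
    also have "\<dots> \<le> 4 * 2 ^ (card U' + card {y\<in>U'. f y = y})" using IH unfolding A'_def by simp
    also have "\<dots> = 2 ^ (card U + card {y\<in>U. f y = y})" using key by (simp add: power_add)
    finally show ?thesis unfolding A_def .
  qed
qed


lemma (in group) subgroup_card_dvd:
  assumes "subgroup A G" "subgroup B G" "A \<subseteq> B"
  shows "card A dvd card B"
proof -
  have "group (G\<lparr>carrier := B\<rparr>)" using subgroup_imp_group assms by blast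
  moreover have "subgroup A (G\<lparr>carrier := B\<rparr>)" using subgroup_incl assms by blast
  ultimately have "card (rcosets\<^bsub>G\<lparr>carrier := B\<rparr>\<^esub> A) * card A = order (G\<lparr>carrier := B\<rparr>)"
    using group.lagrange by blast
  then have "card (rcosets\<^bsub>G\<lparr>carrier := B\<rparr>\<^esub> A) * card A = card B" by (simp add: order_def)
  then show ?thesis by (metis dvd_triv_right)
qed

lemma (in group) generate_of_subgroup:
  assumes "subgroup L G" shows "generate G L = L"
  using generate_subgroup_incl[OF _ assms] generate.incl[of _ L G] by blast

lemma (in group) gen_chain:
  assumes "finite (carrier G)" "subgroup H G" "subgroup L G" "L \<subseteq> H"
  shows "\<exists>xs. set xs \<subseteq> H \<and> generate G (L \<union> set xs) = H \<and> 2 ^ length xs * card L \<le> card H"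
  using assms(3,4)
proof (induction "card H - card L" arbitrary: L rule: less_induct)
  case less
  have finH: "finite H" using finite_subset[OF subgroup.subset[OF assms(2)] assms(1)] .
  show ?case
  proof (cases "L = H")
    case True
    show ?thesis
      by (rule exI[of _ "[]"]) (simp add: True generate_of_subgroup assms)
  next
    case False
    then obtain x where x: "x \<in> H" "x \<notin> L" using less.prems(2) by blast
    define L' where "L' = generate G (L \<union> {x})"
    have xc: "x \<in> carrier G" using x(1) subgroup.subset[OF assms(2)] by blast
    have Lc: "L \<subseteq> carrier G" using subgroup.subset[OF less.prems(1)] .
    have Lxc: "L \<union> {x} \<subseteq> carrier G" using xc Lc by blast
    have subL': "subgroup L' G" unfolding L'_def by (rule generate_is_subgroup[OF Lxc])
    have LxH: "L \<union> {x} \<subseteq> H" using x(1) less.prems(2) by blast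
    have L'H: "L' \<subseteq> H" unfolding L'_def by (rule generate_subgroup_incl[OF LxH assms(2)])
    have LL': "L \<subseteq> L'"
    proof
      fix y assume "y \<in> L" then show "y \<in> L'" unfolding L'_def by (intro generate.incl) simp
    qed
    have xL': "x \<in> L'" unfolding L'_def by (intro generate.incl) simp
    have finL': "finite L'" using finite_subset[OF L'H finH] .
    have dv: "card L dvd card L'" using subgroup_card_dvd[OF less.prems(1) subL' LL'] .
    have "L \<subset> L'" using LL' xL' x(2) by blast
    then have "card L < card L'" by (rule psubset_card_mono[OF finL'])
    moreover have "card L > 0"
    proof -
      have "finite L" using finite_subset[OF less.prems(2) finH] .
      moreover have "\<one> \<in> L" using subgroup.one_closed[OF less.prems(1)] .
      ultimately show ?thesis using card_gt_0_iff by blast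
    qed
    ultimately have c2: "2 * card L \<le> card L'"
    proof -
      assume a: "card L < card L'" "0 < card L"
      obtain q where q: "card L' = card L * q" using dv by (auto elim: dvdE)
      have "q \<ge> 2"
      proof (rule ccontr)
        assume "\<not> q \<ge> 2"
        then have "q \<le> 1" by simp
        then have "card L * q \<le> card L" by (simp add: mult_le_cancel1)
        then show False using a q by simp
      qed
      then show ?thesis using q by (simp add: mult.commute)
    qed
    have cH: "card L' \<le> card H" using card_mono[OF finH L'H] .
    have "card H - card L' < card H - card L" using c2 cH \<open>card L > 0\<close> by linarith
    from less.hyps[OF this subL' L'H] obtain xs where
      xs: "set xs \<subseteq> H" "generate G (L' \<union> set xs) = H" "2 ^ length xs * card L' \<le> card H" by blast
    have xsc: "set xs \<subseteq> carrier G" using xs(1) subgroup.subset[OF assms(2)] by blast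
    have "generate G (L \<union> set (x # xs)) = H"
    proof
      show "generate G (L \<union> set (x # xs)) \<subseteq> H"
        using x(1) xs(1) less.prems(2) by (intro generate_subgroup_incl[OF _ assms(2)]) simp
    next
      define E where "E = generate G (L \<union> set (x # xs))"
      have Ec: "L \<union> set (x # xs) \<subseteq> carrier G" using xc Lc xsc by simp
      have subE: "subgroup E G" unfolding E_def by (rule generate_is_subgroup[OF Ec])
      have "L' \<subseteq> E" unfolding L'_def E_def by (rule mono_generate) auto
      moreover have "set xs \<subseteq> E"
      proof
        fix y assume "y \<in> set xs" then show "y \<in> E" unfolding E_def by (intro generate.incl) simp
      qed
      ultimately have "L' \<union> set xs \<subseteq> E" by blast
      from generate_subgroup_incl[OF this subE] xs(2)
      show "H \<subseteq> generate G (L \<union> set (x # xs))" unfolding E_def by simp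
    qed
    moreover have "2 ^ length (x # xs) * card L \<le> card H"
    proof -
      have "2 ^ length (x # xs) * card L = 2 ^ length xs * (2 * card L)" by simp
      also have "\<dots> \<le> 2 ^ length xs * card L'" using c2 by simp
      finally show ?thesis using xs(3) by linarith
    qed
    moreover have "set (x # xs) \<subseteq> H" using xs(1) x(1) by simp
    ultimately show ?thesis by blast
  qed
qed


lemma (in group) card_subgroups_le:
  assumes fin: "finite (carrier G)"
  shows "card {H. subgroup H G} \<le> order G ^ nat \<lfloor>log 2 (order G)\<rfloor>"
proof -
  define n where "n = order G"
  define k where "k = nat \<lfloor>log 2 n\<rfloor>"
  define P where "P = (\<Pi>\<^sub>E i\<in>{..<k}. carrier G)"
  define g where "g = (\<lambda>f. generate G ({\<one>} \<union> f ` {..<k}))"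
  have sub: "{H. subgroup H G} \<subseteq> g ` P"
  proof
    fix H assume "H \<in> {H. subgroup H G}"
    then have H: "subgroup H G" by simp
    obtain xs where xs: "set xs \<subseteq> H" "generate G ({\<one>} \<union> set xs) = H" "2 ^ length xs * card {\<one>} \<le> card H"
      using gen_chain[OF fin H triv_subgroup] subgroup.one_closed[OF H] by auto
    have "card H \<le> n" unfolding n_def order_def using fin subgroup.subset[OF H] card_mono by blast
    then have "2 ^ length xs \<le> n" using xs(3) by simp
    then have "real (length xs) \<le> log 2 n" by (rule le_log2_of_power)
    then have "int (length xs) \<le> \<lfloor>log 2 n\<rfloor>" by (simp add: le_floor_iff)
    then have len: "length xs \<le> k" unfolding k_def by simp
    define f where "f = (\<lambda>i\<in>{..<k}. if i < length xs then xs ! i else \<one>)"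
    have xsc: "set xs \<subseteq> carrier G" using xs(1) subgroup.subset[OF H] by blast
    have allc: "\<And>i. (if i < length xs then xs ! i else \<one>) \<in> carrier G"
      using xsc nth_mem by fastforce
    have fP: "f \<in> P" unfolding P_def f_def restrict_PiE using allc by (simp add: Pi_def)
    have "{\<one>} \<union> f ` {..<k} = {\<one>} \<union> set xs"
    proof
      show "{\<one>} \<union> f ` {..<k} \<subseteq> {\<one>} \<union> set xs" unfolding f_def by auto
      show "{\<one>} \<union> set xs \<subseteq> {\<one>} \<union> f ` {..<k}"
      proof
        fix y assume "y \<in> {\<one>} \<union> set xs"
        then show "y \<in> {\<one>} \<union> f ` {..<k}"
        proof
          assume "y \<in> set xs"
          then obtain i where "i < length xs" "y = xs ! i" by (metis in_set_conv_nth)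
          then show ?thesis using len unfolding f_def by (intro UnI2 image_eqI[of _ _ i]) auto
        qed simp
      qed
    qed
    then have "g f = H" unfolding g_def using xs(2) by simp
    then show "H \<in> g ` P" using fP by blast
  qed
  have "card {H. subgroup H G} \<le> card (g ` P)"
    using sub by (intro card_mono finite_imageI) (simp_all add: P_def fin finite_PiE)
  also have "\<dots> \<le> card P" by (rule card_image_le) (simp add: P_def fin finite_PiE)
  also have "\<dots> = n ^ k" unfolding P_def n_def order_def by (simp add: card_PiE)
  finally show ?thesis unfolding n_def k_def .
qed


lemma (in comm_group) omega_subgroup: "subgroup {x \<in> carrier G. x \<otimes> x = \<one>} G"
proof (rule subgroupI)
  show "{x \<in> carrier G. x \<otimes> x = \<one>} \<subseteq> carrier G" by blast
  have "\<one> \<in> {x \<in> carrier G. x \<otimes> x = \<one>}" by simp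
  then show "{x \<in> carrier G. x \<otimes> x = \<one>} \<noteq> {}" by blast
next
  fix a assume a: "a \<in> {x \<in> carrier G. x \<otimes> x = \<one>}"
  then have ac: "a \<in> carrier G" "a \<otimes> a = \<one>" by auto
  have "inv a \<otimes> inv a = inv (a \<otimes> a)" using inv_mult[OF ac(1) ac(1)] by simp
  also have "\<dots> = \<one>" using ac(2) by simp
  finally show "inv a \<in> {x \<in> carrier G. x \<otimes> x = \<one>}" using ac(1) by simp
next
  fix a b assume a: "a \<in> {x \<in> carrier G. x \<otimes> x = \<one>}" and b: "b \<in> {x \<in> carrier G. x \<otimes> x = \<one>}"
  then have "(a \<otimes> b) \<otimes> (a \<otimes> b) = (a \<otimes> a) \<otimes> (b \<otimes> b)" by (simp add: m_ac)
  then show "a \<otimes> b \<in> {x \<in> carrier G. x \<otimes> x = \<one>}" using a b by simp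
qed

lemma (in group) sq_eq_pow2: "x \<in> carrier G \<Longrightarrow> x [^] (2::nat) = x \<otimes> x"
  by (simp add: numeral_2_eq_2)

lemma (in group) ord_le2_iff:
  assumes "finite (carrier G)" "x \<in> carrier G"
  shows "ord x \<le> 2 \<longleftrightarrow> x \<otimes> x = \<one>"
proof -
  have "x \<otimes> x = \<one> \<longleftrightarrow> ord x dvd 2" using pow_eq_id[OF assms(2), of 2] sq_eq_pow2[OF assms(2)] by simp
  moreover have "ord x \<ge> 1" using ord_ge_1[OF assms] .
  moreover have "ord x dvd 2 \<longleftrightarrow> ord x = 1 \<or> ord x = 2"
  proof
    assume "ord x dvd 2" then have "ord x \<le> 2" by (simp add: dvd_imp_le)
    then show "ord x = 1 \<or> ord x = 2" using \<open>ord x \<ge> 1\<close> by linarith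
  qed auto
  ultimately show ?thesis by linarith
qed

lemma (in group) inv_self_iff:
  assumes "x \<in> carrier G" shows "inv x = x \<longleftrightarrow> x \<otimes> x = \<one>"
proof
  assume "inv x = x" then show "x \<otimes> x = \<one>" using r_inv[OF assms] by simp
next
  assume "x \<otimes> x = \<one>" then show "inv x = x" using inv_equality[of x x] assms by simp
qed

lemma (in group) union_rcosets_card:
  assumes "subgroup H G" "finite (carrier G)" "C \<subseteq> rcosets H"
  shows "card (\<Union>C) = card C * card H"
proof -
  have Hc: "H \<subseteq> carrier G" using subgroup.subset[OF assms(1)] .
  have "rcosets H \<subseteq> Pow (carrier G)" using rcosets_subset_PowG[OF assms(1)] .
  then have finC: "finite C" using assms(2,3) by (meson finite_Pow_iff finite_subset)
  have finU: "finite (\<Union>C)" using assms(2,3) \<open>rcosets H \<subseteq> Pow (carrier G)\<close>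
    by (meson Sup_le_iff PowD finite_subset subset_iff)
  have cards: "\<forall>c\<in>C. card c = card H" using card_rcosets_equal[OF _ Hc] assms(3) by (metis subsetD)
  have disj: "\<forall>c1\<in>C. \<forall>c2\<in>C. c1 \<noteq> c2 \<longrightarrow> c1 \<inter> c2 = {}"
    using rcos_disjoint[OF assms(1)] assms(3) unfolding pairwise_def disjnt_def by blast
  show ?thesis using card_partition[OF finC finU] cards disj by (simp add: mult.commute)
qed

lemma (in comm_group) inv_rcos:
  assumes "subgroup H G" "a \<in> carrier G"
  shows "(\<lambda>x. inv x) ` (H #> a) = H #> inv a"
proof -
  have Hc: "H \<subseteq> carrier G" using subgroup.subset[OF assms(1)] .
  show ?thesis
  proof
    show "(\<lambda>x. inv x) ` (H #> a) \<subseteq> H #> inv a"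
    proof
      fix y assume "y \<in> (\<lambda>x. inv x) ` (H #> a)"
      then obtain h where h: "h \<in> H" "y = inv (h \<otimes> a)" unfolding r_coset_def by blast
      then have "y = inv h \<otimes> inv a" using Hc assms(2) by (simp add: inv_mult subsetD)
      moreover have "inv h \<in> H" using subgroup.m_inv_closed[OF assms(1) h(1)] .
      ultimately show "y \<in> H #> inv a" unfolding r_coset_def by blast
    qed
  next
    show "H #> inv a \<subseteq> (\<lambda>x. inv x) ` (H #> a)"
    proof
      fix y assume "y \<in> H #> inv a"
      then obtain h where h: "h \<in> H" "y = h \<otimes> inv a" unfolding r_coset_def by blast
      have hc: "h \<in> carrier G" using h(1) Hc by blast
      have "inv (inv h \<otimes> a) = h \<otimes> inv a" using hc assms(2) by (simp add: inv_mult)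
      moreover have "inv h \<otimes> a \<in> H #> a" using subgroup.m_inv_closed[OF assms(1) h(1)] unfolding r_coset_def by blast
      ultimately show "y \<in> (\<lambda>x. inv x) ` (H #> a)" using h(2) by (metis image_eqI)
    qed
  qed
qed

lemma odd_prime_factor:
  fixes n :: nat
  assumes "n > 0" "\<not> (\<exists>k. n = 2 ^ k)"
  shows "\<exists>p. Factorial_Ring.prime p \<and> p dvd n \<and> p \<noteq> 2"
  using assms
proof (induction n rule: less_induct)
  case (less n)
  have "n \<noteq> 1"
  proof
    assume "n = 1" then have "n = 2 ^ 0" by simp
    then show False using less.prems(2) by blast
  qed
  then obtain p where p: "Factorial_Ring.prime p" "p dvd n" using prime_factor_nat by blast
  show ?case
  proof (cases "p = 2")
    case False then show ?thesis using p by blast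
  next
    case True
    then obtain n' where n': "n = 2 * n'" using p(2) by blast
    have "n' > 0" "n' < n" using n' less.prems(1) by auto
    moreover have "\<not> (\<exists>k. n' = 2 ^ k)"
    proof
      assume "\<exists>k. n' = 2 ^ k"
      then obtain k where "n' = 2 ^ k" by blast
      then have "n = 2 ^ Suc k" using n' by simp
      then show False using less.prems(2) by blast
    qed
    ultimately obtain q where "Factorial_Ring.prime q" "q dvd n'" "q \<noteq> 2" using less.IH by blast
    moreover have "q dvd n" using \<open>q dvd n'\<close> n' by simp
    ultimately show ?thesis by blast
  qed
qed

lemma (in group) exp4_imp_pow2:
  assumes fin: "finite (carrier G)" and all4: "\<forall>x\<in>carrier G. x [^] (4::nat) = \<one>"
  shows "\<exists>k. order G = 2 ^ k"
proof (rule ccontr)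
  assume nk: "\<not> (\<exists>k. order G = 2 ^ k)"
  have "order G > 0" using fin by (simp add: order_gt_0_iff_finite)
  then obtain p where p: "Factorial_Ring.prime p" "p dvd order G" "p \<noteq> 2" using odd_prime_factor nk by blast
  then obtain q where q: "order G = p ^ 1 * q" by auto
  obtain P where P: "subgroup P G" "card P = p ^ 1" using sylow_thm[OF p(1) is_group q fin] by blast
  have "card P \<ge> 2" using P(2) prime_ge_2_nat[OF p(1)] by simp
  then have "P \<noteq> {\<one>}" by auto
  then obtain x where xP: "x \<in> P" "x \<noteq> \<one>" using subgroup.one_closed[OF P(1)] by blast
  have xc: "x \<in> carrier G" using xP(1) subgroup.subset[OF P(1)] by blast
  have grpP: "group (G\<lparr>carrier := P\<rparr>)" using subgroup_imp_group[OF P(1)] .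
  have "x [^]\<^bsub>G\<lparr>carrier := P\<rparr>\<^esub> order (G\<lparr>carrier := P\<rparr>) = \<one>\<^bsub>G\<lparr>carrier := P\<rparr>\<^esub>"
    using group.pow_order_eq_1[OF grpP] xP(1) by simp
  then have "x [^] p = \<one>" using P(2) by (simp add: order_def flip: nat_pow_consistent)
  then have d1: "ord x dvd p" using pow_eq_id[OF xc] by simp
  have "x [^] (4::nat) = \<one>" using all4 xc by blast
  then have d2: "ord x dvd 4" using pow_eq_id[OF xc, of 4] by simp
  have "ord x \<noteq> 1" using ord_eq_1[OF xc] xP(2) by simp
  moreover have "\<forall>m. m dvd p \<longrightarrow> m = 1 \<or> m = p" using p(1) by (simp add: prime_nat_iff)
  ultimately have "ord x = p" using d1 by blast
  then have "p dvd 4" using d2 by simp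
  then have "p \<le> 4" by (simp add: dvd_imp_le)
  moreover have "p \<ge> 2" using prime_ge_2_nat[OF p(1)] .
  ultimately have "p = 3 \<or> p = 4" using p(3) by linarith
  moreover have "\<not> Factorial_Ring.prime (4::nat)"
  proof
    assume "Factorial_Ring.prime (4::nat)"
    moreover have "(2::nat) dvd 4" by simp
    ultimately have "(2::nat) = 1 \<or> (2::nat) = 4" unfolding prime_nat_iff by blast
    then show False by simp
  qed
  ultimately show False using \<open>p dvd 4\<close> p(1) by auto
qed

lemma (in group) index_ge2:
  assumes fin: "finite (carrier G)" and K: "subgroup K G" "K \<noteq> carrier G"
  shows "2 * card K \<le> order G"
proof -
  have lag: "card (rcosets K) * card K = order G" using lagrange[OF K(1)] .
  have "K \<subset> carrier G" using subgroup.subset[OF K(1)] K(2) by blast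
  then have lt: "card K < order G" unfolding order_def using fin by (simp add: psubset_card_mono)
  have "card (rcosets K) \<ge> 2"
  proof (rule ccontr)
    assume "\<not> card (rcosets K) \<ge> 2"
    then have "card (rcosets K) \<le> 1" by simp
    then have "card (rcosets K) * card K \<le> card K" by simp
    then show False using lag lt by simp
  qed
  then show ?thesis using lag by (metis mult_le_mono1)
qed

lemma dvd_proper_half:
  fixes a b :: nat
  assumes "a dvd b" "a < b"
  shows "2 * a \<le> b"
proof -
  obtain q where q: "b = a * q" using assms(1) by (auto elim: dvdE)
  have "q \<ge> 2"
  proof (rule ccontr)
    assume "\<not> q \<ge> 2"
    then have "q \<le> 1" by simp
    then have "a * q \<le> a" by (simp add: mult_le_cancel1)
    then show False using assms(2) q by simp
  qed
  then show ?thesis using q by (simp add: mult.commute)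
qed

lemma (in comm_group) K_omega_bound:
  assumes fin: "finite (carrier G)" and nk: "\<not> (\<exists>k. order G = 2 ^ k)"
    and K: "subgroup K G" "K \<noteq> carrier G"
  shows "6 * (card K + card ({x \<in> carrier G. x \<otimes> x = \<one>} \<inter> K)) \<le> 5 * order G"
proof -
  define Om where "Om = {x \<in> carrier G. x \<otimes> x = \<one>}"
  have subOK: "subgroup (Om \<inter> K) G" unfolding Om_def using subgroups_Inter_pair[OF omega_subgroup K(1)] .
  have OKK: "Om \<inter> K \<subseteq> K" by blast
  have dv: "card (Om \<inter> K) dvd card K" using subgroup_card_dvd[OF subOK K(1) OKK] .
  have half: "2 * card K \<le> order G" using index_ge2[OF fin K] .
  have finK: "finite K" using finite_subset[OF subgroup.subset[OF K(1)] fin] .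
  show ?thesis
  proof (cases "Om \<inter> K = K")
    case False
    then have "Om \<inter> K \<subset> K" by blast
    then have "card (Om \<inter> K) < card K" using psubset_card_mono[OF finK] by blast
    then have "2 * card (Om \<inter> K) \<le> card K" using dvd_proper_half dv by blast
    then show ?thesis using half unfolding Om_def distrib_left by linarith
  next
    case True
    then have KO: "K \<subseteq> Om" by blast
    show ?thesis
    proof (cases "3 * card K \<le> order G")
      case True
      then show ?thesis using \<open>Om \<inter> K = K\<close> unfolding Om_def by simp
    next
      case False
      have lag: "card (rcosets K) * card K = order G" using lagrange[OF K(1)] .
      have "card (rcosets K) < 3"
      proof (rule ccontr)
        assume "\<not> card (rcosets K) < 3"
        then have "3 * card K \<le> card (rcosets K) * card K" by simp
        then show False using False lag by simp
      qed
      moreover have "card (rcosets K) \<ge> 2"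
      proof (rule ccontr)
        assume "\<not> card (rcosets K) \<ge> 2"
        then have "card (rcosets K) \<le> 1" by simp
        then have "card (rcosets K) * card K \<le> card K" by simp
        moreover have "card K < order G"
        proof -
          have "K \<subset> carrier G" using subgroup.subset[OF K(1)] K(2) by blast
          then show ?thesis unfolding order_def using fin by (simp add: psubset_card_mono)
        qed
        ultimately show False using lag by simp
      qed
      ultimately have "card (rcosets K) = 2" by simp
      then have n2: "order G = 2 * card K" using lag by simp
      have sq: "x \<otimes> x \<in> K" if xc: "x \<in> carrier G" for x
      proof (rule ccontr)
        assume nsq: "x \<otimes> x \<notin> K"
        have xK: "x \<notin> K" using nsq subgroup.m_closed[OF K(1)] by blast
        have Kc: "K \<subseteq> carrier G" using subgroup.subset[OF K(1)] .
        have inj: "inj_on (\<lambda>y. y \<otimes> x) K" using inj_on_g[OF Kc xc] .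
        have img: "(\<lambda>y. y \<otimes> x) ` K \<subseteq> carrier G - K"
        proof
          fix z assume "z \<in> (\<lambda>y. y \<otimes> x) ` K"
          then obtain y where y: "y \<in> K" "z = y \<otimes> x" by blast
          have yc: "y \<in> carrier G" using y(1) Kc by blast
          have "z \<notin> K"
          proof
            assume "z \<in> K"
            then have "inv y \<otimes> z \<in> K" using subgroup.m_closed[OF K(1)] subgroup.m_inv_closed[OF K(1) y(1)] by blast
            moreover have "inv y \<otimes> z = x" using y(2) yc xc by (simp add: m_assoc[symmetric])
            ultimately show False using xK by simp
          qed
          then show "z \<in> carrier G - K" using y yc xc by simp
        qed
        have "card ((\<lambda>y. y \<otimes> x) ` K) = card K" using card_image[OF inj] .
        moreover have "card (carrier G - K) = card K"
          using n2 card_Diff_subset[OF finK Kc] unfolding order_def by simp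
        ultimately have "(\<lambda>y. y \<otimes> x) ` K = carrier G - K"
          using card_subset_eq[OF _ img] fin by simp
        moreover have "x \<otimes> x \<in> carrier G - K" using nsq xc by simp
        ultimately obtain y where y: "y \<in> K" "x \<otimes> x = y \<otimes> x" by (metis imageE)
        then have "x = y" using xc Kc by (meson r_cancel subsetD)
        then show False using xK y(1) by simp
      qed
      have "\<forall>x\<in>carrier G. x [^] (4::nat) = \<one>"
      proof
        fix x assume xc: "x \<in> carrier G"
        have "x \<otimes> x \<in> Om" using sq[OF xc] KO by blast
        then have "(x \<otimes> x) \<otimes> (x \<otimes> x) = \<one>" unfolding Om_def by simp
        moreover have "x [^] (4::nat) = (x \<otimes> x) \<otimes> (x \<otimes> x)" using xc by (simp add: numeral_eq_Suc m_assoc)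
        ultimately show "x [^] (4::nat) = \<one>" by simp
      qed
      then have "\<exists>k. order G = 2 ^ k" using exp4_imp_pow2[OF fin] by blast
      then show ?thesis using nk by blast
    qed
  qed
qed

lemma invol_image_eq:
  assumes "\<forall>x\<in>Z. f x \<in> Z \<and> f (f x) = x"
  shows "f ` Z = Z"
proof
  show "f ` Z \<subseteq> Z" using assms by blast
  show "Z \<subseteq> f ` Z"
  proof
    fix x assume "x \<in> Z" then show "x \<in> f ` Z" using assms by (metis image_eqI)
  qed
qed

lemma (in group) inv_image_closed_iff:
  assumes "Z \<subseteq> carrier G"
  shows "((\<lambda>x. inv x) ` Z = Z) \<longleftrightarrow> (\<forall>y\<in>Z. inv y \<in> Z)"
proof
  assume "(\<lambda>x. inv x) ` Z = Z" then show "\<forall>y\<in>Z. inv y \<in> Z" by blast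
next
  assume "\<forall>y\<in>Z. inv y \<in> Z"
  moreover have "\<forall>y\<in>Z. inv (inv y) = y" using assms by auto
  ultimately show "(\<lambda>x. inv x) ` Z = Z" using invol_image_eq[of Z "\<lambda>x. inv x"] by blast
qed

lemma (in comm_group) lcancel_comm: "a \<in> carrier G \<Longrightarrow> b \<in> carrier G \<Longrightarrow> a \<otimes> (b \<otimes> inv a) = b"
  using m_lcomm[of a b "inv a"] by simp

lemma (in comm_group) fix_bound2:
  assumes fin: "finite (carrier G)" and H: "subgroup H G" "card H = 2"
    and K: "subgroup K G" and HK: "H \<subseteq> K"
  shows "2 * card {c \<in> {c \<in> rcosets H. c \<inter> K = {}}. (\<lambda>x. inv x) ` c = c}
           + card ({x \<in> carrier G. x \<otimes> x = \<one>} \<inter> K) \<le> 2 * card {x \<in> carrier G. x \<otimes> x = \<one>}"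
proof -
  define Om where "Om = {x \<in> carrier G. x \<otimes> x = \<one>}"
  define T where "T = {x \<in> carrier G. x \<otimes> x \<in> H}"
  define Fx where "Fx = {c \<in> {c \<in> rcosets H. c \<inter> K = {}}. (\<lambda>x. inv x) ` c = c}"
  have Hc: "H \<subseteq> carrier G" using subgroup.subset[OF H(1)] .
  have Kc: "K \<subseteq> carrier G" using subgroup.subset[OF K] .
  have finT: "finite T" unfolding T_def using fin by simp
  have finOm: "finite Om" unfolding Om_def using fin by simp
  have FxT: "\<Union>Fx \<subseteq> T - K"
  proof
    fix y assume "y \<in> \<Union>Fx"
    then obtain c where c: "c \<in> rcosets H" "c \<inter> K = {}" "(\<lambda>x. inv x) ` c = c" "y \<in> c"
      unfolding Fx_def by blast
    obtain a where a: "a \<in> carrier G" "c = H #> a" using c(1) unfolding RCOSETS_def by blast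
    have "inv y \<in> c" using c(3,4) by blast
    obtain h1 where h1: "h1 \<in> H" "y = h1 \<otimes> a" using c(4) a(2) unfolding r_coset_def by blast
    obtain h2 where h2: "h2 \<in> H" "inv y = h2 \<otimes> a" using \<open>inv y \<in> c\<close> a(2) unfolding r_coset_def by blast
    have h1c: "h1 \<in> carrier G" and h2c: "h2 \<in> carrier G" using h1(1) h2(1) Hc by auto
    have yc: "y \<in> carrier G" using h1 h1c a(1) by simp
    have "y = inv (h2 \<otimes> a)" using h2(2) yc by (metis inv_inv)
    then have "y = inv h2 \<otimes> inv a" using h2c a(1) by (simp add: inv_mult)
    then have "y \<otimes> y = (h1 \<otimes> a) \<otimes> (inv h2 \<otimes> inv a)" using h1(2) by simp
    also have "\<dots> = h1 \<otimes> (a \<otimes> (inv h2 \<otimes> inv a))" using h1c h2c a(1) by (simp add: m_assoc)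
    also have "\<dots> = h1 \<otimes> inv h2" using lcancel_comm[OF a(1), of "inv h2"] h2c by simp
    finally have "y \<otimes> y \<in> H" using subgroup.m_closed[OF H(1) h1(1) subgroup.m_inv_closed[OF H(1) h2(1)]] by simp
    moreover have "y \<notin> K" using c(2,4) by blast
    ultimately show "y \<in> T - K" unfolding T_def using yc by simp
  qed
  have "card (\<Union>Fx) = card Fx * card H"
    by (rule union_rcosets_card[OF H(1) fin]) (auto simp: Fx_def)
  then have c1: "2 * card Fx \<le> card (T - K)" using card_mono[OF _ FxT] finT H(2) by simp
  obtain h where h: "h \<in> H" "h \<noteq> \<one>"
  proof -
    have "H \<noteq> {\<one>}" using H(2) by auto
    then show ?thesis using that subgroup.one_closed[OF H(1)] by blast
  qed
  have hc: "h \<in> carrier G" using h(1) Hc by blast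
  have finH: "finite H" using H(2) by (simp add: card_ge_0_finite)
  have Heq: "H = {\<one>, h}"
  proof -
    have sub: "{\<one>, h} \<subseteq> H" using h(1) subgroup.one_closed[OF H(1)] by blast
    have "card {\<one>, h} = 2" using h(2) by simp
    then show ?thesis using card_subset_eq[OF finH sub] H(2) by simp
  qed
  define R where "R = {x \<in> carrier G. x \<otimes> x = h}"
  have TOR: "T \<subseteq> Om \<union> R" unfolding T_def Om_def R_def using Heq by auto
  have finR: "finite R" unfolding R_def using fin by simp
  have cR: "card R \<le> card Om"
  proof (cases "R = {}")
    case True then show ?thesis by simp
  next
    case False
    then obtain r where r: "r \<in> R" by blast
    have rc: "r \<in> carrier G" and rr: "r \<otimes> r = h" using r unfolding R_def by auto
    have inj: "inj_on (\<lambda>x. inv r \<otimes> x) R"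
      by (rule inj_onI) (use rc in \<open>auto simp: R_def\<close>)
    have "(\<lambda>x. inv r \<otimes> x) ` R \<subseteq> Om"
    proof
      fix z assume "z \<in> (\<lambda>x. inv r \<otimes> x) ` R"
      then obtain x where x: "x \<in> carrier G" "x \<otimes> x = h" "z = inv r \<otimes> x" unfolding R_def by blast
      have "z \<otimes> z = (inv r \<otimes> inv r) \<otimes> (x \<otimes> x)" using x(1,3) rc by (simp add: m_ac)
      also have "\<dots> = inv (r \<otimes> r) \<otimes> (x \<otimes> x)" using rc by (simp add: inv_mult)
      also have "\<dots> = \<one>" using rr x(2) hc by simp
      finally show "z \<in> Om" unfolding Om_def using x rc by simp
    qed
    then show ?thesis using card_inj_on_le[OF inj _ finOm] by blast
  qed
  have cT: "card T \<le> 2 * card Om"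
  proof -
    have "card T \<le> card (Om \<union> R)" using card_mono[OF _ TOR] finOm finR by simp
    also have "\<dots> \<le> card Om + card R" by (rule card_Un_le)
    finally show ?thesis using cR by simp
  qed
  have OKT: "Om \<inter> K \<subseteq> T \<inter> K" unfolding Om_def T_def using subgroup.one_closed[OF H(1)] by auto
  have "card (T - K) + card (T \<inter> K) = card T" using card_Diff_subset_Int finT
    by (metis Diff_Diff_Int Int_commute card_Diff_subset finite_Int inf_le2 le_add_diff_inverse2 card_mono)
  moreover have "card (Om \<inter> K) \<le> card (T \<inter> K)" using card_mono[OF _ OKT] finT by simp
  ultimately have "card (T - K) + card (Om \<inter> K) \<le> 2 * card Om" using cT by linarith
  then show ?thesis using c1 unfolding Fx_def Om_def by linarith
qed

lemma (in comm_group) pair_bound: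
  assumes fin: "finite (carrier G)" and nk: "\<not> (\<exists>k. order G = 2 ^ k)"
    and H: "subgroup H G" and K: "subgroup K G" and H1: "H \<noteq> {\<one>}" and HK: "H \<subseteq> K"
    and Kn: "K \<noteq> carrier G"
  shows "real (card {S. inverse_closed G S \<and> (\<exists>C \<subseteq> rcosets H. S - K = \<Union>C)})
     \<le> 2 powr (real (card {x \<in> carrier G. x \<otimes> x = \<one>}) / 2 + 11 * real (order G) / 24)"
proof -
  define Om where "Om = {x \<in> carrier G. x \<otimes> x = \<one>}"
  define F where "F = {S. inverse_closed G S \<and> (\<exists>C \<subseteq> rcosets H. S - K = \<Union>C)}"
  define A1 where "A1 = {Z. Z \<subseteq> K \<and> (\<lambda>x. inv x) ` Z = Z}"
  define U where "U = {c \<in> rcosets H. c \<inter> K = {}}"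
  define \<iota> where "\<iota> = (\<lambda>c. (\<lambda>x. inv x) ` (c::'a set))"
  define B where "B = {C. C \<subseteq> U \<and> \<iota> ` C = C}"
  define Fx where "Fx = {c \<in> U. \<iota> c = c}"
  have Hc: "H \<subseteq> carrier G" using subgroup.subset[OF H] .
  have Kc: "K \<subseteq> carrier G" using subgroup.subset[OF K] .
  have finK: "finite K" using finite_subset[OF Kc fin] .
  have rcP: "rcosets H \<subseteq> Pow (carrier G)" using rcosets_subset_PowG[OF H] .
  have finRc: "finite (rcosets H)" using rcP fin by (meson finite_Pow_iff finite_subset)
  have finU: "finite U" unfolding U_def using finRc by simp
  have finA1: "finite A1" unfolding A1_def using finK by simp
  have finB: "finite B" unfolding B_def using finU by simp
  have \<iota>U: "\<forall>c\<in>U. \<iota> c \<in> U \<and> \<iota> (\<iota> c) = c"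
  proof
    fix c assume cU: "c \<in> U"
    then obtain a where a: "a \<in> carrier G" "c = H #> a" unfolding U_def RCOSETS_def by blast
    have cc: "c \<subseteq> carrier G" using cU rcP unfolding U_def by blast
    have "\<iota> c = H #> inv a" unfolding \<iota>_def a(2) using inv_rcos[OF H a(1)] .
    then have "\<iota> c \<in> rcosets H" using a(1) by (simp add: rcosetsI Hc)
    moreover have "\<iota> c \<inter> K = {}"
    proof (rule ccontr)
      assume "\<iota> c \<inter> K \<noteq> {}"
      then obtain y where "y \<in> c" "inv y \<in> K" unfolding \<iota>_def by blast
      then have "inv (inv y) \<in> K" using subgroup.m_inv_closed[OF K] by blast
      then have "y \<in> K" using \<open>y \<in> c\<close> cc by auto
      then show False using \<open>y \<in> c\<close> cU unfolding U_def by blast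
    qed
    moreover have "\<iota> (\<iota> c) = c"
    proof -
      have "\<iota> (\<iota> c) = (\<lambda>x. inv (inv x)) ` c" unfolding \<iota>_def by (simp add: image_image)
      also have "\<dots> = (\<lambda>x. x) ` c" using cc by (intro image_cong) auto
      also have "\<dots> = c" by simp
      finally show ?thesis .
    qed
    ultimately show "\<iota> c \<in> U \<and> \<iota> (\<iota> c) = c" unfolding U_def by blast
  qed
  have inj: "inj_on (\<lambda>S. (S \<inter> K, S - K)) F"
  proof (rule inj_onI)
    fix S S' assume "(S \<inter> K, S - K) = (S' \<inter> K, S' - K)"
    then show "S = S'" by blast
  qed
  have maps: "(\<lambda>S. (S \<inter> K, S - K)) ` F \<subseteq> A1 \<times> (Union ` B)"
  proof
    fix p assume "p \<in> (\<lambda>S. (S \<inter> K, S - K)) ` F"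
    then obtain S where SF: "S \<in> F" and p: "p = (S \<inter> K, S - K)" by blast
    have Sc: "S \<subseteq> carrier G" and Scl: "\<forall>y\<in>S. inv y \<in> S"
      using SF inv_image_closed_iff unfolding F_def inverse_closed_def by auto
    obtain C where C: "C \<subseteq> rcosets H" "S - K = \<Union>C" using SF unfolding F_def by blast
    have "S \<inter> K \<in> A1"
    proof -
      have "\<forall>y\<in>S \<inter> K. inv y \<in> S \<inter> K" using Scl subgroup.m_inv_closed[OF K] by blast
      then show ?thesis unfolding A1_def using inv_image_closed_iff[of "S \<inter> K"] Sc by blast
    qed
    moreover have "S - K \<in> Union ` B"
    proof -
      define C' where "C' = {c \<in> U. c \<subseteq> S - K}"
      have "\<Union>C' = S - K"
      proof
        show "\<Union>C' \<subseteq> S - K" unfolding C'_def by blast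
        show "S - K \<subseteq> \<Union>C'"
        proof
          fix y assume "y \<in> S - K"
          then obtain c where c: "c \<in> C" "y \<in> c" using C(2) by blast
          have "c \<subseteq> S - K" using c(1) C(2) by blast
          then have "c \<in> C'" unfolding C'_def U_def using c(1) C(1) by blast
          then show "y \<in> \<Union>C'" using c(2) by blast
        qed
      qed
      moreover have "C' \<in> B"
      proof -
        have "\<forall>c\<in>C'. \<iota> c \<in> C' \<and> \<iota> (\<iota> c) = c"
        proof
          fix c assume cC: "c \<in> C'"
          then have cU: "c \<in> U" and cS: "c \<subseteq> S - K" unfolding C'_def by auto
          have "\<iota> c \<subseteq> S - K"
          proof
            fix z assume "z \<in> \<iota> c"
            then obtain y where y: "y \<in> c" "z = inv y" unfolding \<iota>_def by blast
            have "z \<in> S" using y cS Scl by blast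
            moreover have "z \<notin> K"
            proof
              assume "z \<in> K"
              then have "inv z \<in> K" using subgroup.m_inv_closed[OF K] by blast
              moreover have "inv z = y" using y Sc cS by auto
              ultimately show False using y(1) cS by blast
            qed
            ultimately show "z \<in> S - K" by blast
          qed
          then show "\<iota> c \<in> C' \<and> \<iota> (\<iota> c) = c" using \<iota>U cU unfolding C'_def by blast
        qed
        then have "\<iota> ` C' = C'" by (rule invol_image_eq)
        then show ?thesis unfolding B_def C'_def by blast
      qed
      ultimately show ?thesis by blast
    qed
    ultimately show "p \<in> A1 \<times> (Union ` B)" using p by blast
  qed
  have cF: "card F \<le> card A1 * card B"
  proof -
    have "card F \<le> card (A1 \<times> (Union ` B))"
      using card_inj_on_le[OF inj maps] finA1 finB by simp
    also have "\<dots> = card A1 * card (Union ` B)" by (simp add: card_cartesian_product)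
    also have "\<dots> \<le> card A1 * card B" by (simp add: card_image_le finB)
    finally show ?thesis .
  qed
  have invK: "\<forall>x\<in>K. inv x \<in> K \<and> inv (inv x) = x" using subgroup.m_inv_closed[OF K] Kc by auto
  have cA1: "card A1 ^ 2 \<le> 2 ^ (card K + card {x\<in>K. inv x = x})"
    unfolding A1_def using invol_closed_card[OF finK invK] .
  have fixK: "{x\<in>K. inv x = x} = Om \<inter> K" unfolding Om_def using inv_self_iff Kc by auto
  have cB: "card B ^ 2 \<le> 2 ^ (card U + card Fx)"
    unfolding B_def Fx_def using invol_closed_card[OF finU \<iota>U] .
  have UU: "\<Union>U = carrier G - K"
  proof
    show "\<Union>U \<subseteq> carrier G - K" unfolding U_def using rcP by blast
    show "carrier G - K \<subseteq> \<Union>U"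
    proof
      fix x assume x: "x \<in> carrier G - K"
      have "H #> x \<in> rcosets H" using x by (simp add: rcosetsI Hc)
      moreover have "(H #> x) \<inter> K = {}"
      proof (rule ccontr)
        assume "(H #> x) \<inter> K \<noteq> {}"
        then obtain h where h: "h \<in> H" "h \<otimes> x \<in> K" unfolding r_coset_def by blast
        have hK: "h \<in> K" using h(1) HK by blast
        have hc: "h \<in> carrier G" using h(1) Hc by blast
        have "inv h \<otimes> (h \<otimes> x) \<in> K" using subgroup.m_closed[OF K subgroup.m_inv_closed[OF K hK] h(2)] .
        moreover have "inv h \<otimes> (h \<otimes> x) = x" using hc x by (simp add: m_assoc[symmetric])
        ultimately show False using x by simp
      qed
      moreover have "x \<in> H #> x" using x by (simp add: rcos_self[OF _ H])
      ultimately show "x \<in> \<Union>U" unfolding U_def by blast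
    qed
  qed
  have cU: "card U * card H + card K = order G"
  proof -
    have "card (\<Union>U) = card U * card H" by (rule union_rcosets_card[OF H fin]) (auto simp: U_def)
    moreover have "card (carrier G - K) + card K = order G"
      unfolding order_def using card_Diff_subset[OF finK Kc] card_mono[OF fin Kc] by simp
    ultimately show ?thesis using UU by simp
  qed
  have half: "2 * card K \<le> order G" using index_ge2[OF fin K Kn] .
  have cOK: "card (Om \<inter> K) \<le> card Om" unfolding Om_def using fin by (intro card_mono) auto
  have cH2: "card H \<ge> 2"
  proof -
    have finH: "finite H" using finite_subset[OF Hc fin] .
    obtain h where "h \<in> H" "h \<noteq> \<one>" using H1 subgroup.one_closed[OF H] by blast
    then have "{\<one>, h} \<subseteq> H" using subgroup.one_closed[OF H] by blast
    then have "card {\<one>, h} \<le> card H" using card_mono[OF finH] by blast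
    then show ?thesis using \<open>h \<noteq> \<one>\<close> by simp
  qed
  have expo: "12 * (card K + card (Om \<inter> K) + (card U + card Fx)) \<le> 12 * card Om + 11 * order G"
  proof (cases "card H = 2")
    case True
    have fb: "2 * card Fx + card (Om \<inter> K) \<le> 2 * card Om"
      using fix_bound2[OF fin H True K HK] unfolding Fx_def U_def \<iota>_def Om_def .
    have kb: "6 * (card K + card (Om \<inter> K)) \<le> 5 * order G"
      using K_omega_bound[OF fin nk K Kn] unfolding Om_def .
    have "card U * 2 + card K = order G" using cU True by simp
    then show ?thesis using fb kb unfolding distrib_left by linarith
  next
    case False
    then have c3: "card H \<ge> 3" using cH2 by simp
    have "card Fx \<le> card U" unfolding Fx_def using finU by (intro card_mono) auto
    moreover have "card U * 3 \<le> card U * card H" using c3 by simp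
    ultimately show ?thesis using cU half cOK unfolding distrib_left by linarith
  qed
  define e where "e = card K + card (Om \<inter> K) + (card U + card Fx)"
  have "card F ^ 2 \<le> (card A1 * card B) ^ 2" by (rule power_mono[OF cF]) simp
  also have "\<dots> = card A1 ^ 2 * card B ^ 2" by (simp add: power_mult_distrib)
  also have "\<dots> \<le> 2 ^ (card K + card (Om \<inter> K)) * 2 ^ (card U + card Fx)"
    using cA1 cB fixK by (intro mult_mono) auto
  also have "\<dots> = 2 ^ e" unfolding e_def by (simp add: power_add)
  finally have sq: "card F ^ 2 \<le> 2 ^ e" .
  have "real (card F) = sqrt (real (card F ^ 2))" by simp
  also have "\<dots> \<le> sqrt (2 ^ e)"
  proof -
    have "real (card F ^ 2) \<le> real (2 ^ e)" using sq by (simp only: of_nat_le_iff)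
    then have "real (card F ^ 2) \<le> 2 ^ e" by simp
    then show ?thesis by (rule real_sqrt_le_mono)
  qed
  also have "\<dots> = 2 powr (real e / 2)"
  proof -
    have "(2::real) ^ e = 2 powr (real e)" by (simp add: powr_realpow)
    then have "sqrt (2 ^ e) = (2 powr (real e)) powr (1/2)" by (simp add: powr_half_sqrt)
    also have "\<dots> = 2 powr (real e / 2)" by (simp add: powr_powr)
    finally show ?thesis .
  qed
  also have "\<dots> \<le> 2 powr (real (card Om) / 2 + 11 * real (order G) / 24)"
  proof (rule powr_mono)
    have "real (12 * e) \<le> real (12 * card Om + 11 * order G)"
      using expo unfolding e_def by (simp only: of_nat_le_iff)
    then have "12 * real e \<le> 12 * real (card Om) + 11 * real (order G)" by simp
    then show "real e / 2 \<le> real (card Om) / 2 + 11 * real (order G) / 24" by simp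
  qed simp
  finally show ?thesis unfolding F_def Om_def .
qed

theorem lemma5p4:
  fixes G :: "('a, 'b) monoid_scheme" and n m :: nat
  assumes "comm_group G"
    and "finite (carrier G)"
    and "n = order G"
    and "n > 0"
    and "\<not> (\<exists>k::nat. n = 2 ^ k)"
    and "m = card {x \<in> carrier G. group.ord G x \<le> 2}"
  shows "real (card {S. inverse_closed G S \<and>
            (\<exists>H K. subgroup H G \<and> subgroup K G \<and> H \<noteq> {\<one>\<^bsub>G\<^esub>} \<and> H \<subseteq> K \<and>
                   K \<noteq> carrier G \<and>
                   (\<exists>C \<subseteq> rcosets\<^bsub>G\<^esub> H. S - K = \<Union>C))})
         \<le> 2 powr (real m / 2 + 11 * real n / 24 + 2 * (log 2 (real n))\<^sup>2)"
proof -
  interpret comm_group G by (rule assms(1))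
  have fin: "finite (carrier G)" by (rule assms(2))
  have nk: "\<not> (\<exists>k. order G = 2 ^ k)" using assms(3,5) by simp
  have mOm: "m = card {x \<in> carrier G. x \<otimes>\<^bsub>G\<^esub> x = \<one>\<^bsub>G\<^esub>}"
  proof -
    have "{x \<in> carrier G. group.ord G x \<le> 2} = {x \<in> carrier G. x \<otimes>\<^bsub>G\<^esub> x = \<one>\<^bsub>G\<^esub>}"
      using ord_le2_iff[OF fin] by blast
    then show ?thesis using assms(6) by simp
  qed
  define Sub where "Sub = {H. subgroup H G}"
  define P where "P = {p \<in> Sub \<times> Sub. fst p \<noteq> {\<one>\<^bsub>G\<^esub>} \<and> fst p \<subseteq> snd p \<and> snd p \<noteq> carrier G}"
  define F where "F = (\<lambda>p. {S. inverse_closed G S \<and> (\<exists>C \<subseteq> rcosets\<^bsub>G\<^esub> (fst p). S - snd p = \<Union>C)})"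
  define Bd where "Bd = 2 powr (real m / 2 + 11 * real n / 24)"
  define k where "k = nat \<lfloor>log 2 (real n)\<rfloor>"
  have finSub: "finite Sub"
  proof -
    have "Sub \<subseteq> Pow (carrier G)" unfolding Sub_def using subgroup.subset by blast
    then show ?thesis using fin by (meson finite_Pow_iff finite_subset)
  qed
  have finP: "finite P" unfolding P_def using finSub by simp
  have eq: "{S. inverse_closed G S \<and>
            (\<exists>H K. subgroup H G \<and> subgroup K G \<and> H \<noteq> {\<one>\<^bsub>G\<^esub>} \<and> H \<subseteq> K \<and>
                   K \<noteq> carrier G \<and>
                   (\<exists>C \<subseteq> rcosets\<^bsub>G\<^esub> H. S - K = \<Union>C))} = (\<Union>p\<in>P. F p)"
  proof (intro equalityI subsetI)
    fix S assume "S \<in> {S. inverse_closed G S \<and>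
            (\<exists>H K. subgroup H G \<and> subgroup K G \<and> H \<noteq> {\<one>\<^bsub>G\<^esub>} \<and> H \<subseteq> K \<and>
                   K \<noteq> carrier G \<and>
                   (\<exists>C \<subseteq> rcosets\<^bsub>G\<^esub> H. S - K = \<Union>C))}"
    then obtain H K where HK: "inverse_closed G S" "subgroup H G" "subgroup K G" "H \<noteq> {\<one>\<^bsub>G\<^esub>}" "H \<subseteq> K"
       "K \<noteq> carrier G" "\<exists>C \<subseteq> rcosets\<^bsub>G\<^esub> H. S - K = \<Union>C" by blast
    have "(H, K) \<in> P" unfolding P_def Sub_def using HK by simp
    moreover have "S \<in> F (H, K)" unfolding F_def using HK by simp
    ultimately show "S \<in> (\<Union>p\<in>P. F p)" by blast
  next
    fix S assume "S \<in> (\<Union>p\<in>P. F p)"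
    then obtain H K where "(H, K) \<in> P" "S \<in> F (H, K)" by auto
    then have HK: "inverse_closed G S" "subgroup H G" "subgroup K G" "H \<noteq> {\<one>\<^bsub>G\<^esub>}" "H \<subseteq> K"
       "K \<noteq> carrier G" "\<exists>C \<subseteq> rcosets\<^bsub>G\<^esub> H. S - K = \<Union>C" unfolding P_def F_def Sub_def by simp_all
    then show "S \<in> {S. inverse_closed G S \<and>
            (\<exists>H K. subgroup H G \<and> subgroup K G \<and> H \<noteq> {\<one>\<^bsub>G\<^esub>} \<and> H \<subseteq> K \<and>
                   K \<noteq> carrier G \<and>
                   (\<exists>C \<subseteq> rcosets\<^bsub>G\<^esub> H. S - K = \<Union>C))}" by blast
  qed
  have cardU: "card (\<Union>p\<in>P. F p) \<le> (\<Sum>p\<in>P. card (F p))" by (rule card_UN_le[OF finP])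
  have each: "real (card (F p)) \<le> Bd" if "p \<in> P" for p
  proof -
    obtain H K where p: "p = (H, K)" by (cases p)
    have H: "subgroup H G" and K: "subgroup K G" and H1: "H \<noteq> {\<one>\<^bsub>G\<^esub>}" and HK: "H \<subseteq> K" and Kn: "K \<noteq> carrier G"
      using that unfolding P_def Sub_def p by auto
    have "real (card (F p)) \<le> 2 powr (real (card {x \<in> carrier G. x \<otimes>\<^bsub>G\<^esub> x = \<one>\<^bsub>G\<^esub>}) / 2 + 11 * real (order G) / 24)"
      using pair_bound[OF fin nk H K H1 HK Kn] unfolding F_def p by simp
    then show ?thesis unfolding Bd_def mOm assms(3) .
  qed
  have "real (card (\<Union>p\<in>P. F p)) \<le> (\<Sum>p\<in>P. real (card (F p)))"
    using cardU by (metis of_nat_le_iff of_nat_sum)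
  also have "\<dots> \<le> real (card P) * Bd" using sum_bounded_above[of P "\<lambda>p. real (card (F p))" Bd] each by simp
  finally have c1: "real (card (\<Union>p\<in>P. F p)) \<le> real (card P) * Bd" .
  have cSub: "card Sub \<le> n ^ k" unfolding Sub_def k_def assms(3) using card_subgroups_le[OF fin] .
  have cP: "card P \<le> n ^ k * n ^ k"
  proof -
    have "card P \<le> card (Sub \<times> Sub)" unfolding P_def using finSub by (intro card_mono) auto
    also have "\<dots> = card Sub * card Sub" by (simp add: card_cartesian_product)
    also have "\<dots> \<le> n ^ k * n ^ k" using cSub by (simp add: mult_le_mono)
    finally show ?thesis .
  qed
  define L where "L = log 2 (real n)"
  have npos: "real n > 0" using assms(4) by simp
  have L0: "L \<ge> 0" unfolding L_def using assms(4) by simp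
  have fl0: "\<lfloor>L\<rfloor> \<ge> 0" using L0 by simp
  have kL: "real k \<le> L"
  proof -
    have "real k = real_of_int \<lfloor>L\<rfloor>" unfolding k_def L_def[symmetric] using fl0 by simp
    then show ?thesis by simp
  qed
  have nL: "real n = 2 powr L" unfolding L_def using npos by simp
  have "real (n ^ k * n ^ k) = real n ^ (2 * k)" by (simp add: mult_2 power_add)
  also have "\<dots> = real n powr (real (2 * k))" by (rule powr_realpow[OF npos, symmetric])
  also have "\<dots> = (2 powr L) powr (real (2 * k))" by (simp only: nL)
  also have "\<dots> = 2 powr (L * real (2 * k))" by (rule powr_powr)
  also have "\<dots> \<le> 2 powr (2 * L\<^sup>2)"
  proof (rule powr_mono)
    have "L * real k \<le> L * L" using mult_left_mono[OF kL L0] .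
    then show "L * real (2 * k) \<le> 2 * L\<^sup>2" by (simp add: power2_eq_square)
  qed simp
  finally have cP1: "real (n ^ k * n ^ k) \<le> 2 powr (2 * L\<^sup>2)" .
  have "real (card P) \<le> real (n ^ k * n ^ k)" using cP by (simp only: of_nat_le_iff)
  then have cP2: "real (card P) \<le> 2 powr (2 * L\<^sup>2)" using cP1 by (rule order_trans)
  have "real (card P) * Bd \<le> 2 powr (2 * L\<^sup>2) * Bd"
    using cP2 by (intro mult_right_mono) (simp_all add: Bd_def)
  also have "\<dots> = 2 powr (real m / 2 + 11 * real n / 24 + 2 * L\<^sup>2)"
    unfolding Bd_def by (simp add: powr_add[symmetric] add_ac)
  finally have c2: "real (card P) * Bd \<le> 2 powr (real m / 2 + 11 * real n / 24 + 2 * L\<^sup>2)" .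
  show ?thesis unfolding eq L_def[symmetric] using c1 c2 by (rule order_trans)
qed

end
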